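(* Let $\Omega\in\mathscr A$ be a $1$-admissible set with $\mathscr C_1(\Omega)\neq\emptyset$. If (P.4), (P.5) and (P.6) hold, then there exist $1$-Cheeger sets of $\Omega$ of minimal $\mathfrak m$-measure among all $1$-Cheeger sets of $\Omega$.
   Context: $(X,\mathscr A,\mathfrak m)$ is a non-negative $\sigma$-finite measure space; for $A,B\in\mathscr A$, "$A\subset B$" means $\mathfrak m(A\setminus B)=0$. $P\colon\mathscr A\to[0,+\infty]$ is a proper functional. (P.4): if $\chi_{E_k}\to\chi_E$ in $L^1(X,\mathfrak m)$ then $P(E)\le\liminf_k P(E_k)$. (P.5): for every $c\ge0$, $\{\chi_E:E\in\mathscr A,\ P(E)\le c\}$ is compact in $L^1(X,\mathfrak m)$. (P.6): there is $f\colon(0,+\infty)\to(0,+\infty)$ with $\lim_{\varepsilon\to0^+}f(\varepsilon)=+\infty$ such that $\mathfrak m(E)\le\varepsilon$ implies $P(E)\ge f(\varepsilon)\mathfrak m(E)$. $\Omega$ is $1$-admissible if it contains some $E$ with $0<\mathfrak m(E)<+\infty$, $P(E)<+\infty$; $h_1(\Omega)=\inf\{P(E)/\mathfrak m(E): E\subset\Omega,\ 0<\mathfrak m(E)<+\infty,\ P(E)<+\infty\}$; minimizers are $1$-Cheeger sets, forming $\mathscr C_1(\Omega)$. *)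

theory Defs
  imports "HOL-Analysis.Analysis"
begin

definition ae_subset :: "'a measure \<Rightarrow> 'a set \<Rightarrow> 'a set \<Rightarrow> bool" where
  "ae_subset M A B \<longleftrightarrow> emeasure M (A - B) = 0"

definition chi_L1_conv :: "'a measure \<Rightarrow> (nat \<Rightarrow> 'a set) \<Rightarrow> 'a set \<Rightarrow> bool" where
  "chi_L1_conv M Es E \<longleftrightarrow>
     (\<forall>k. integrable M (\<lambda>x. indicator (Es k) x :: real)) \<and>
     integrable M (\<lambda>x. indicator E x :: real) \<and>
     ((\<lambda>k. \<integral>x. \<bar>indicator (Es k) x - indicator E x\<bar> \<partial>M) \<longlonglongrightarrow> (0::real))"

definition cheeger_competitors :: "'a measure \<Rightarrow> ('a set \<Rightarrow> ennreal) \<Rightarrow> 'a set \<Rightarrow> 'a set set" where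
  "cheeger_competitors M P \<Omega> =
     {E \<in> sets M. ae_subset M E \<Omega> \<and> 0 < emeasure M E \<and> emeasure M E < \<infinity> \<and> P E < \<infinity>}"

definition one_admissible :: "'a measure \<Rightarrow> ('a set \<Rightarrow> ennreal) \<Rightarrow> 'a set \<Rightarrow> bool" where
  "one_admissible M P \<Omega> \<longleftrightarrow> cheeger_competitors M P \<Omega> \<noteq> {}"

definition h1 :: "'a measure \<Rightarrow> ('a set \<Rightarrow> ennreal) \<Rightarrow> 'a set \<Rightarrow> ennreal" where
  "h1 M P \<Omega> = (INF E \<in> cheeger_competitors M P \<Omega>. P E / emeasure M E)"

definition cheeger1_sets :: "'a measure \<Rightarrow> ('a set \<Rightarrow> ennreal) \<Rightarrow> 'a set \<Rightarrow> 'a set set" where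
  "cheeger1_sets M P \<Omega> = {E \<in> cheeger_competitors M P \<Omega>. P E / emeasure M E = h1 M P \<Omega>}"

end

theory Submission imports Defs begin

lemma meas_diff_bound:
  assumes "A \<in> sets M" "B \<in> sets M" "emeasure M A < \<infinity>" "emeasure M B < \<infinity>"
  shows "\<bar>measure M A - measure M B\<bar> \<le> (\<integral>x. \<bar>indicator A x - indicator B x\<bar> \<partial>M :: real)"
proof -
  have iA: "integrable M (\<lambda>x. indicator A x :: real)" using assms by (simp add: integrable_indicator_iff sets.Int_space_eq2)
  have iB: "integrable M (\<lambda>x. indicator B x :: real)" using assms by (simp add: integrable_indicator_iff sets.Int_space_eq2)
  have "measure M A - measure M B = (\<integral>x. indicator A x - indicator B x \<partial>M :: real)"
    using iA iB assms by (simp add: integral_diff sets.Int_space_eq2)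
  also have "\<bar>\<dots>\<bar> \<le> (\<integral>x. \<bar>indicator A x - indicator B x\<bar> \<partial>M :: real)"
    using integral_norm_bound[of M "\<lambda>x. indicator A x - indicator B x :: real"] by simp
  finally show ?thesis .
qed

lemma meas_minus_bound:
  assumes "A \<in> sets M" "B \<in> sets M" "C \<in> sets M" "emeasure M A < \<infinity>" "emeasure M B < \<infinity>"
    and "emeasure M (B - C) = 0"
  shows "measure M (A - C) \<le> (\<integral>x. \<bar>indicator B x - indicator A x\<bar> \<partial>M :: real)"
proof -
  have iA: "integrable M (\<lambda>x. indicator A x :: real)" using assms by (simp add: integrable_indicator_iff sets.Int_space_eq2)
  have iB: "integrable M (\<lambda>x. indicator B x :: real)" using assms by (simp add: integrable_indicator_iff sets.Int_space_eq2)
  have fin1: "emeasure M (A - C) < \<infinity>" using assms(4) by (meson Diff_subset assms(1,3) emeasure_mono le_less_trans sets.Diff)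
  have iAC: "integrable M (\<lambda>x. indicator (A - C) x :: real)" using assms fin1 by (simp add: integrable_indicator_iff sets.Int_space_eq2)
  have iBC: "integrable M (\<lambda>x. indicator (B - C) x :: real)" using assms by (simp add: integrable_indicator_iff sets.Int_space_eq2)
  have "measure M (A - C) = (\<integral>x. indicator (A - C) x \<partial>M :: real)"
    using assms by (simp add: sets.Int_space_eq2)
  also have "\<dots> \<le> (\<integral>x. \<bar>indicator B x - indicator A x\<bar> + indicator (B - C) x \<partial>M :: real)"
    apply (rule integral_mono)
    using iAC apply simp
    using iA iB iBC apply simp
    by (auto simp: indicator_def)
  also have "\<dots> = (\<integral>x. \<bar>indicator B x - indicator A x\<bar> \<partial>M :: real) + measure M (B - C)"
    using iA iB iBC assms by (simp add: integral_add sets.Int_space_eq2)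
  also have "measure M (B - C) = 0" using assms by (simp add: measure_def)
  finally show ?thesis by simp
qed

theorem proposition3p15:
  fixes M :: "'a measure" and P :: "'a set \<Rightarrow> ennreal" and \<Omega> :: "'a set"
  assumes sigma_finite: "sigma_finite_measure M"
    and proper: "\<exists>E \<in> sets M. P E \<noteq> \<infinity>"
    and P4: "\<And>Es E. (\<forall>k. Es k \<in> sets M) \<Longrightarrow> E \<in> sets M \<Longrightarrow> chi_L1_conv M Es E \<Longrightarrow>
               P E \<le> liminf (\<lambda>k. P (Es k))"
    and P5_L1: "\<And>c E. E \<in> sets M \<Longrightarrow> P E \<le> ennreal c \<Longrightarrow> integrable M (\<lambda>x. indicator E x :: real)"
    and P5_compact: "\<And>c (Es :: nat \<Rightarrow> 'a set). (\<forall>k. Es k \<in> sets M \<and> P (Es k) \<le> ennreal c) \<Longrightarrow>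
               \<exists>r E. strict_mono r \<and> E \<in> sets M \<and> P E \<le> ennreal c \<and> chi_L1_conv M (Es \<circ> r) E"
    and P6: "\<exists>f :: real \<Rightarrow> real. (\<forall>\<epsilon>>0. f \<epsilon> > 0) \<and> filterlim f at_top (at_right 0) \<and>
               (\<forall>\<epsilon>>0. \<forall>E \<in> sets M. emeasure M E \<le> ennreal \<epsilon> \<longrightarrow>
                   ennreal (f \<epsilon>) * emeasure M E \<le> P E)"
    and Omega: "\<Omega> \<in> sets M"
    and adm: "one_admissible M P \<Omega>"
    and nonempty: "cheeger1_sets M P \<Omega> \<noteq> {}"
  shows "\<exists>E \<in> cheeger1_sets M P \<Omega>. \<forall>F \<in> cheeger1_sets M P \<Omega>. emeasure M E \<le> emeasure M F"
proof -
  define C where "C = cheeger1_sets M P \<Omega>"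
  define h where "h = h1 M P \<Omega>"
  have Cmem: "F \<in> sets M \<and> emeasure M (F - \<Omega>) = 0 \<and> 0 < emeasure M F \<and> emeasure M F < \<infinity> \<and> P F < \<infinity>
      \<and> P F / emeasure M F = h" if "F \<in> C" for F
    using that unfolding C_def h_def cheeger1_sets_def cheeger_competitors_def ae_subset_def by auto
  obtain E0 where E0: "E0 \<in> C" using nonempty C_def by auto
  obtain hr where hr: "h = ennreal hr" "0 \<le> hr"
  proof -
    have "P E0 = ennreal (enn2real (P E0))" using Cmem[OF E0] by (simp add: ennreal_enn2real_if less_top)
    moreover have "emeasure M E0 = ennreal (measure M E0)" using Cmem[OF E0] by (auto simp: emeasure_eq_ennreal_measure less_top)
    moreover have "measure M E0 > 0" using Cmem[OF E0] calculation(2) by auto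
    ultimately have "h = ennreal (enn2real (P E0) / measure M E0)"
      using Cmem[OF E0] by (metis divide_ennreal enn2real_nonneg)
    then show ?thesis using that by (metis divide_nonneg_nonneg enn2real_nonneg measure_nonneg)
  qed
  have Pform: "P F = ennreal (hr * measure M F)" "emeasure M F = ennreal (measure M F)" "measure M F > 0"
    if "F \<in> C" for F
  proof -
    show em: "emeasure M F = ennreal (measure M F)" using Cmem[OF that] by (auto simp: emeasure_eq_ennreal_measure less_top)
    show pos: "measure M F > 0" using Cmem[OF that] em by auto
    have ne: "emeasure M F \<noteq> 0" "emeasure M F < top" using Cmem[OF that] by auto
    have "P F / emeasure M F * emeasure M F = P F * (emeasure M F / emeasure M F)"
      by (simp add: ennreal_times_divide mult.commute)
    then have "P F = P F / emeasure M F * emeasure M F"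
      using ne by simp
    also have "\<dots> = ennreal hr * ennreal (measure M F)" using Cmem[OF that] hr em by simp
    finally show "P F = ennreal (hr * measure M F)" using hr by (simp add: ennreal_mult)
  qed
  define S where "S = (\<lambda>F. measure M F) ` C"
  define mu where "mu = Inf S"
  have Sne: "S \<noteq> {}" using E0 S_def by auto
  have Sbdd: "bdd_below S" unfolding S_def by (rule bdd_belowI[of _ 0]) auto
  have mu_le: "mu \<le> measure M F" if "F \<in> C" for F
    unfolding mu_def S_def by (rule cInf_lower) (use that Sbdd S_def in auto)
  have approx: "\<exists>F\<in>C. measure M F < mu + e" if "e > 0" for e
  proof -
    have "Inf S < mu + e" using that mu_def by simp
    then show ?thesis using cInf_less_iff[OF Sne Sbdd] S_def by auto
  qed
  have "\<forall>k. \<exists>F\<in>C. measure M F < mu + 1 / Suc k" using approx by simp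
  then obtain Fs where Fs: "\<And>k. Fs k \<in> C" "\<And>k. measure M (Fs k) < mu + 1 / Suc k" by metis
  have Fs_le: "P (Fs k) \<le> ennreal (hr * (mu + 1))" for k
  proof -
    have "1 / real (Suc k) \<le> 1" by simp
    then have "measure M (Fs k) \<le> mu + 1" using Fs(2)[of k] by linarith
    then have "hr * measure M (Fs k) \<le> hr * (mu + 1)" using hr(2) by (simp add: mult_left_mono)
    then show ?thesis using Pform(1)[OF Fs(1)] by (simp add: ennreal_leI)
  qed
  obtain r E where rE: "strict_mono r" "E \<in> sets M" "P E \<le> ennreal (hr * (mu + 1))"
      "chi_L1_conv M (Fs \<circ> r) E"
    using P5_compact[of "\<lambda>k. Fs k" "hr * (mu + 1)"] Fs_le Cmem[OF Fs(1)] by blast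
  have intE: "integrable M (\<lambda>x. indicator E x :: real)" using rE(4) chi_L1_conv_def by auto
  have Efin: "emeasure M E < \<infinity>" using intE rE(2) by (simp add: integrable_indicator_iff sets.Int_space_eq2)
  have L: "(\<lambda>k. \<integral>x. \<bar>indicator (Fs (r k)) x - indicator E x\<bar> \<partial>M :: real) \<longlonglongrightarrow> 0"
    using rE(4) unfolding chi_L1_conv_def by (simp add: o_def)
  have lim1: "(\<lambda>k. measure M (Fs (r k))) \<longlonglongrightarrow> measure M E"
  proof -
    have "(\<lambda>k. measure M (Fs (r k)) - measure M E) \<longlonglongrightarrow> 0"
    proof (rule Lim_null_comparison[OF _ L])
      show "\<forall>\<^sub>F k in sequentially. norm (measure M (Fs (r k)) - measure M E)
          \<le> (\<integral>x. \<bar>indicator (Fs (r k)) x - indicator E x\<bar> \<partial>M :: real)"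
        using meas_diff_bound[of "Fs (r k)" M E for k] Cmem[OF Fs(1)] rE(2) Efin by auto
    qed
    then show ?thesis by (simp add: LIM_zero_iff)
  qed
  have lim2: "(\<lambda>k. measure M (Fs (r k))) \<longlonglongrightarrow> mu"
  proof (rule tendsto_sandwich[of "\<lambda>_. mu" _ _ "\<lambda>k. mu + 1 / Suc k"])
    show "\<forall>\<^sub>F k in sequentially. mu \<le> measure M (Fs (r k))" using mu_le Fs(1) by auto
    have "r k \<ge> k" for k using rE(1) by (simp add: seq_suble)
    then have "1 / real (Suc (r k)) \<le> 1 / Suc k" for k by (simp add: frac_le)
    then show "\<forall>\<^sub>F k in sequentially. measure M (Fs (r k)) \<le> mu + 1 / Suc k"
    proof (intro always_eventually allI)
      fix k
      have "measure M (Fs (r k)) < mu + 1 / Suc (r k)" by (rule Fs(2))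
      then show "measure M (Fs (r k)) \<le> mu + 1 / Suc k"
        using \<open>1 / real (Suc (r k)) \<le> 1 / Suc k\<close> by linarith
    qed
    show "(\<lambda>k. mu + 1 / real (Suc k)) \<longlonglongrightarrow> mu"
      using tendsto_add[OF tendsto_const LIMSEQ_inverse_real_of_nat] by (simp add: inverse_eq_divide)
  qed simp
  have muE: "measure M E = mu" using LIMSEQ_unique[OF lim1 lim2] .
  have mupos: "mu > 0"
  proof (rule ccontr)
    assume "\<not> mu > 0"
    then have mu0: "mu \<le> 0" by simp
    obtain f :: "real \<Rightarrow> real" where f: "filterlim f at_top (at_right 0)"
      "\<forall>\<epsilon>>0. \<forall>E \<in> sets M. emeasure M E \<le> ennreal \<epsilon> \<longrightarrow> ennreal (f \<epsilon>) * emeasure M E \<le> P E"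
      using P6 by blast
    have "\<forall>\<^sub>F x in at_right 0. f x > hr" using f(1) filterlim_at_top_dense by blast
    then obtain b where b: "b > 0" "\<And>y. y > 0 \<Longrightarrow> y < b \<Longrightarrow> f y > hr"
      unfolding eventually_at_right_field by auto
    define e where "e = b / 2"
    have e: "e > 0" "e < b" using b e_def by auto
    obtain F where F: "F \<in> C" "measure M F < e" using approx[OF e(1)] mu0 by force
    have "ennreal (f e) * emeasure M F \<le> P F"
    proof -
      have "emeasure M F \<le> ennreal e" using Pform(2)[OF F(1)] F(2) by (simp add: ennreal_leI)
      then show ?thesis using f(2) e(1) Cmem[OF F(1)] by blast
    qed
    then have "ennreal (f e * measure M F) \<le> ennreal (hr * measure M F)"
      using Pform[OF F(1)] b(2)[OF e] hr(2) by (simp add: ennreal_mult)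
    then have "f e * measure M F \<le> hr * measure M F"
      using hr(2) by (simp add: ennreal_le_iff)
    then have "f e \<le> hr" using Pform(3)[OF F(1)] by simp
    then show False using b(2)[OF e] by simp
  qed
  have emE: "emeasure M E = ennreal mu" using Efin muE by (auto simp: emeasure_eq_ennreal_measure less_top)
  have aeE: "emeasure M (E - \<Omega>) = 0"
  proof -
    have "measure M (E - \<Omega>) \<le> 0"
    proof (rule tendsto_le[OF trivial_limit_sequentially L tendsto_const])
      show "\<forall>\<^sub>F k in sequentially. measure M (E - \<Omega>)
          \<le> (\<integral>x. \<bar>indicator (Fs (r k)) x - indicator E x\<bar> \<partial>M :: real)"
        using meas_minus_bound[of E M "Fs (r k)" \<Omega> for k] Cmem[OF Fs(1)] rE(2) Efin Omega by auto
    qed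
    moreover have "emeasure M (E - \<Omega>) < \<infinity>"
      using Efin by (meson Diff_subset Omega emeasure_mono le_less_trans rE(2) sets.Diff)
    ultimately have m0: "measure M (E - \<Omega>) = 0" "emeasure M (E - \<Omega>) \<noteq> top"
      by (auto intro: antisym)
    show ?thesis using emeasure_eq_ennreal_measure[OF m0(2)] m0(1) by simp
  qed
  have Ecomp: "E \<in> cheeger_competitors M P \<Omega>"
    unfolding cheeger_competitors_def ae_subset_def using rE(2,3) aeE emE mupos Efin
    by (auto intro: le_less_trans)
  have ge: "h \<le> P E / emeasure M E"
    unfolding h_def h1_def by (rule INF_lower[OF Ecomp])
  have limP: "(\<lambda>k. P ((Fs \<circ> r) k)) \<longlonglongrightarrow> ennreal (hr * mu)"
  proof -
    have "(\<lambda>k. ennreal (hr * measure M (Fs (r k)))) \<longlonglongrightarrow> ennreal (hr * mu)"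
      by (intro tendsto_ennrealI tendsto_mult tendsto_const lim2)
    then show ?thesis using Pform(1)[OF Fs(1)] by simp
  qed
  have "P E \<le> liminf (\<lambda>k. P ((Fs \<circ> r) k))"
    using P4[of "Fs \<circ> r" E] rE Cmem[OF Fs(1)] by auto
  also have "\<dots> = ennreal (hr * mu)" by (rule lim_imp_Liminf[OF trivial_limit_sequentially limP])
  finally have "P E / emeasure M E \<le> ennreal (hr * mu) / ennreal mu"
    using emE by (simp add: divide_right_mono_ennreal)
  also have "\<dots> = h" using hr mupos by (simp add: divide_ennreal)
  finally have "P E / emeasure M E = h" using ge by simp
  then have EC: "E \<in> C" using Ecomp unfolding C_def h_def cheeger1_sets_def by simp
  show ?thesis unfolding C_def[symmetric]
  proof (intro bexI[OF _ EC] ballI)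
    fix F assume "F \<in> C"
    then show "emeasure M E \<le> emeasure M F" using emE Pform(2) mu_le by (simp add: ennreal_leI)
  qed
qed
end
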